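(* Let $G=(L,R,E)$ be a bipartite graph, $f:2^E\to\mathbb{R}_{\ge0}$ non-negative, monotonically non-decreasing and submodular, $p\in(0,1)$, and run $\mathrm{SIMULATE2}$ (see context) to obtain $M,N,S$ and $w$. For any $t>0$, with $\alpha=\frac{p}{1-p}$ and $\theta=\frac{t+\alpha}{\alpha}$, $$\mathbb{E}[f(S)]\ge\Big(\frac1\theta-\frac{1}{t\,p^2}\Big)\mathbb{E}[w(S)].$$
   Context: $f_M(e)=f(M\cup\{e\})-f(M)$. $\mathrm{SIMULATE2}$: start with $M=N=\emptyset$ and a working copy of $E$. While there is an edge $e^*=(\ell^*,r^* )$ in the working edge set such that $M\cup\{e^*\}$ is a matching, take such an edge maximizing $f_M(e^* )$ (fixed tie-breaking); let $M_{e^*}$ be the current $M$; flip an independent coin with head probability $p$; on heads add $e^*$ to $M$, otherwise to $N$; then remove all edges incident to $\ell^*$ from the working edge set. Finally let $S$ be the set of edges $(\ell,r)\in N$ that are the only edge of $N$ incident to $r$. Define $w(e)=f_{M_e}(e)$ for every edge $e$ selected during the loop and $w(e)=0$ for all other edges; $w(T)=\sum_{e\in T}w(e)$. *)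

theory Defs
  imports "HOL-Probability.Probability"
begin

type_synonym ('l, 'r) edge = "'l \<times> 'r"

definition is_matching :: "('l \<times> 'r) set \<Rightarrow> bool" where
  "is_matching M \<longleftrightarrow> (\<forall>e1\<in>M. \<forall>e2\<in>M. e1 \<noteq> e2 \<longrightarrow> fst e1 \<noteq> fst e2 \<and> snd e1 \<noteq> snd e2)"

definition marg :: "(('l \<times> 'r) set \<Rightarrow> real) \<Rightarrow> ('l \<times> 'r) set \<Rightarrow> 'l \<times> 'r \<Rightarrow> real" where
  "marg f M e = f (insert e M) - f M"

definition cands :: "('l \<times> 'r) set \<Rightarrow> ('l \<times> 'r) set \<Rightarrow> ('l \<times> 'r) set" where
  "cands M W = {e \<in> W. is_matching (insert e M)}"

definition select :: "(('l \<times> 'r) set \<Rightarrow> real) \<Rightarrow> ('l \<times> 'r \<Rightarrow> nat) \<Rightarrow> ('l \<times> 'r) set \<Rightarrow> ('l \<times> 'r) set \<Rightarrow> 'l \<times> 'r" where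
  "select f tb M C =
     (let best = Max (marg f M ` C);
          T = {e \<in> C. marg f M e = best}
      in THE e. e \<in> T \<and> tb e = Min (tb ` T))"

text \<open>State: (M, N, working edge set, weight function w).
  The i-th loop iteration uses coin c i (True = heads).  The fuel bounds the
  number of iterations; with fuel = card E the loop always terminates.\<close>
fun sim2_loop :: "(('l \<times> 'r) set \<Rightarrow> real) \<Rightarrow> ('l \<times> 'r \<Rightarrow> nat) \<Rightarrow> (nat \<Rightarrow> bool) \<Rightarrow> nat \<Rightarrow> nat
   \<Rightarrow> ('l \<times> 'r) set \<times> ('l \<times> 'r) set \<times> ('l \<times> 'r) set \<times> ('l \<times> 'r \<Rightarrow> real)
   \<Rightarrow> ('l \<times> 'r) set \<times> ('l \<times> 'r) set \<times> ('l \<times> 'r) set \<times> ('l \<times> 'r \<Rightarrow> real)" where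
  "sim2_loop f tb c i 0 st = st"
| "sim2_loop f tb c i (Suc n) (M, N, W, w) =
     (if cands M W = {} then (M, N, W, w)
      else (let e = select f tb M (cands M W);
                w' = w(e := marg f M e);
                W' = W - {e' \<in> W. fst e' = fst e}
            in if c i then sim2_loop f tb c (Suc i) n (insert e M, N, W', w')
               else sim2_loop f tb c (Suc i) n (M, insert e N, W', w')))"

definition simulate2 :: "('l \<times> 'r) set \<Rightarrow> (('l \<times> 'r) set \<Rightarrow> real) \<Rightarrow> ('l \<times> 'r \<Rightarrow> nat) \<Rightarrow> (nat \<Rightarrow> bool)
   \<Rightarrow> ('l \<times> 'r) set \<times> ('l \<times> 'r) set \<times> ('l \<times> 'r \<Rightarrow> real)" where
  "simulate2 E f tb c =
     (case sim2_loop f tb c 0 (card E) ({}, {}, E, (\<lambda>_. 0)) of (M, N, W, w) \<Rightarrow> (M, N, w))"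

definition S_of :: "('l \<times> 'r) set \<Rightarrow> ('l \<times> 'r) set" where
  "S_of N = {e \<in> N. \<forall>e'\<in>N. snd e' = snd e \<longrightarrow> e' = e}"

definition coins :: "nat \<Rightarrow> real \<Rightarrow> (nat \<Rightarrow> bool) pmf" where
  "coins n p = Pi_pmf {..<n} False (\<lambda>_. bernoulli_pmf p)"

end

theory Submission imports Defs begin

definition Inv0 :: "('l \<times> 'r) set \<Rightarrow> ('l \<times> 'r) set \<times> ('l \<times> 'r) set \<times> ('l \<times> 'r) set \<times> ('l \<times> 'r \<Rightarrow> real) \<Rightarrow> bool" where
  "Inv0 E st = (case st of (M,N,W,w) \<Rightarrow> M \<subseteq> E \<and> N \<subseteq> E \<and> W \<subseteq> E \<and> W \<inter> M = {} \<and> W \<inter> N = {}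
      \<and> is_matching M \<and> (\<forall>e\<in>N. 0 \<le> w e))"

definition Inv5 :: "(('l \<times> 'r) set \<Rightarrow> real) \<Rightarrow> ('l \<times> 'r) set \<times> ('l \<times> 'r) set \<times> ('l \<times> 'r) set \<times> ('l \<times> 'r \<Rightarrow> real) \<Rightarrow> real \<Rightarrow> bool" where
  "Inv5 f st L = (case st of (M,N,W,w) \<Rightarrow> (\<forall>U. U \<subseteq> S_of N \<longrightarrow> sum w U - L \<le> f U))"

definition Pot :: "(('l \<times> 'r) set \<Rightarrow> real) \<Rightarrow> real \<Rightarrow> ('l \<times> 'r) set \<times> ('l \<times> 'r) set \<times> ('l \<times> 'r) set \<times> ('l \<times> 'r \<Rightarrow> real) \<Rightarrow> real \<Rightarrow> real" where
  "Pot f p st L = (case st of (M,N,W,w) \<Rightarrow>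
     ((1-p)/p) * sum w (S_of N) - L - (1-p) * (f (M \<union> S_of N) - f M)
       - ((1-p)^2/p) * sum w {x \<in> S_of N. snd x \<notin> snd ` M})"

definition Fv :: "(('l \<times> 'r) set \<Rightarrow> real) \<Rightarrow> real \<Rightarrow> ('l \<times> 'r) set \<times> ('l \<times> 'r) set \<times> ('l \<times> 'r) set \<times> ('l \<times> 'r \<Rightarrow> real) \<Rightarrow> real" where
  "Fv f p st = (case st of (M,N,W,w) \<Rightarrow> f (S_of N) - (1 - (1-p)/p) * sum w (S_of N))"

lemma S_of_sub: "S_of N \<subseteq> N" unfolding S_of_def by blast

lemma S_of_new:
  assumes "e \<notin> N" "\<forall>e'\<in>N. snd e' \<noteq> snd e"
  shows "S_of (insert e N) = insert e (S_of N)"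
proof (rule set_eqI)
  fix x
  show "x \<in> S_of (insert e N) \<longleftrightarrow> x \<in> insert e (S_of N)"
  proof (cases "x = e")
    case True
    then show ?thesis using assms unfolding S_of_def by simp
  next
    case False
    then show ?thesis using assms unfolding S_of_def by simp metis
  qed
qed

lemma S_of_old:
  assumes "e \<notin> N" "e' \<in> N" "snd e' = snd e"
  shows "S_of (insert e N) = {x \<in> S_of N. snd x \<noteq> snd e}"
proof (rule set_eqI)
  fix x
  show "x \<in> S_of (insert e N) \<longleftrightarrow> x \<in> {x \<in> S_of N. snd x \<noteq> snd e}"
  proof (cases "x = e")
    case True
    then show ?thesis using assms unfolding S_of_def by simp metis
  next
    case False
    then show ?thesis using assms unfolding S_of_def by simp metis
  qed
qed

lemma sum_split:
  assumes "finite A"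
  shows "sum g A = sum g {x\<in>A. P x} + sum g {x\<in>A. \<not> P x}"
proof -
  have "A = {x\<in>A. P x} \<union> {x\<in>A. \<not> P x}" by blast
  then have "sum g A = sum g ({x\<in>A. P x} \<union> {x\<in>A. \<not> P x})" by (rule arg_cong)
  also have "\<dots> = sum g {x\<in>A. P x} + sum g {x\<in>A. \<not> P x}"
    using assms by (intro sum.union_disjoint) (simp_all, blast)
  finally show ?thesis .
qed

lemma alg_eps:
  fixes p aa LL ss uu xx yy :: real
  assumes "0<p"
  shows "(1 - p)/p * aa - LL - (1-p) * ss - (1-p)^2/p * uu \<le> p * ((1-p)/p * aa - LL - (1-p) * (ss + yy - xx) - (1-p)^2/p * uu) + (1-p) * ((1-p)/p * (aa+xx) - (LL + (xx - yy)) - (1-p) * (ss+yy) - (1-p)^2/p * (uu+xx))"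
proof -
  have "p * ((1 - p)/p * aa - LL - (1-p) * (ss + yy - xx) - (1-p)^2/p * uu) + (1-p) * ((1-p)/p * (aa+xx) - (LL + (xx - yy)) - (1-p) * (ss+yy) - (1-p)^2/p * (uu+xx)) - ((1-p)/p * aa - LL - (1-p) * ss - (1-p)^2/p * uu) = 0"
    using assms by (simp add: field_simps power2_eq_square)
  then have "0 \<le> p * ((1 - p)/p * aa - LL - (1-p) * (ss + yy - xx) - (1-p)^2/p * uu) + (1-p) * ((1-p)/p * (aa+xx) - (LL + (xx - yy)) - (1-p) * (ss+yy) - (1-p)^2/p * (uu+xx)) - ((1-p)/p * aa - LL - (1-p) * ss - (1-p)^2/p * uu)"
    by (subst \<open>_ = 0\<close>) simp
  then show ?thesis by (simp only: diff_ge_0_iff_ge)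
qed

lemma alg_neps:
  fixes p aa LL ss ssp uu xx yy bb :: real
  assumes "0<p" "p<1" "yy \<le> xx" "ssp \<le> ss"
  shows "(1 - p)/p * aa - LL - (1-p) * ss - (1-p)^2/p * uu \<le> p * ((1-p)/p * aa - LL - (1-p) * (ss + yy - xx) - (1-p)^2/p * (uu - bb)) + (1-p) * ((1-p)/p * (aa - bb) - LL - (1-p) * ssp - (1-p)^2/p * (uu - bb))"
proof -
  have "p * ((1 - p)/p * aa - LL - (1-p) * (ss + yy - xx) - (1-p)^2/p * (uu - bb)) + (1-p) * ((1-p)/p * (aa - bb) - LL - (1-p) * ssp - (1-p)^2/p * (uu - bb)) - ((1-p)/p * aa - LL - (1-p) * ss - (1-p)^2/p * uu) = p * (1-p) * (xx-yy) + (1-p)^2 * (ss - ssp)"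
    using assms by (simp add: field_simps power2_eq_square)
  moreover have "p * (1-p) * (xx-yy) \<ge> 0" using assms by simp
  moreover have "(1-p)^2 * (ss - ssp) \<ge> 0" using assms by simp
  ultimately have "0 \<le> p * ((1 - p)/p * aa - LL - (1-p) * (ss + yy - xx) - (1-p)^2/p * (uu - bb)) + (1-p) * ((1-p)/p * (aa - bb) - LL - (1-p) * ssp - (1-p)^2/p * (uu - bb)) - ((1-p)/p * aa - LL - (1-p) * ss - (1-p)^2/p * uu)"
    by (metis add_nonneg_nonneg)
  then show ?thesis by (simp only: diff_ge_0_iff_ge)
qed

lemma coins_step:
  fixes g :: "(nat \<Rightarrow> bool) \<Rightarrow> real"
  assumes "0 \<le> p" "p \<le> 1" "finite A" "i \<notin> A"
  shows "measure_pmf.expectation (Pi_pmf (insert i A) False (\<lambda>_. bernoulli_pmf p)) g =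
     p * measure_pmf.expectation (Pi_pmf A False (\<lambda>_. bernoulli_pmf p)) (\<lambda>c. g (c(i:=True)))
   + (1-p) * measure_pmf.expectation (Pi_pmf A False (\<lambda>_. bernoulli_pmf p)) (\<lambda>c. g (c(i:=False)))"
proof -
  have eq: "Pi_pmf (insert i A) False (\<lambda>_. bernoulli_pmf p) =
     bernoulli_pmf p \<bind> (\<lambda>y. map_pmf (\<lambda>f. f(i:=y)) (Pi_pmf A False (\<lambda>_. bernoulli_pmf p)))"
    using assms by (subst Pi_pmf_insert') (auto simp: map_pmf_def)
  have fin: "finite (set_pmf (map_pmf (\<lambda>f. f(i:=y)) (Pi_pmf A False (\<lambda>_. bernoulli_pmf p))))" for y
    using assms(3) by (simp add: set_Pi_pmf finite_PiE_dflt)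
  show ?thesis
    unfolding eq
    by (subst pmf_expectation_bind[of UNIV]) (use assms fin in \<open>auto simp: UNIV_bool\<close>)
qed

lemma loop_cong:
  "(\<And>j. j \<ge> i \<Longrightarrow> c j = c' j) \<Longrightarrow> sim2_loop f tb c i n st = sim2_loop f tb c' i n st"
proof (induction n arbitrary: i st)
  case 0 then show ?case by simp
next
  case (Suc n)
  obtain M N W w where st: "st = (M,N,W,w)" by (cases st) auto
  have h: "sim2_loop f tb c (Suc i) n st' = sim2_loop f tb c' (Suc i) n st'" for st'
    using Suc.prems by (intro Suc.IH) auto
  show ?case using Suc.prems[of i] by (simp add: st Let_def h)
qed


context
  fixes E :: "('l \<times> 'r) set" and f :: "('l \<times> 'r) set \<Rightarrow> real" and tb :: "'l \<times> 'r \<Rightarrow> nat" and p :: real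
  assumes finE: "finite E"
    and nonneg: "\<And>A. A \<subseteq> E \<Longrightarrow> f A \<ge> 0"
    and mono: "\<And>A B. A \<subseteq> B \<Longrightarrow> B \<subseteq> E \<Longrightarrow> f A \<le> f B"
    and submod: "\<And>A B. A \<subseteq> E \<Longrightarrow> B \<subseteq> E \<Longrightarrow> f (A \<union> B) + f (A \<inter> B) \<le> f A + f B"
    and inj: "inj_on tb E"
    and p0: "0 < p" and p1: "p < 1"
begin

lemma dimret:
  assumes "A \<subseteq> B" "B \<subseteq> E" "e \<in> E"
  shows "marg f B e \<le> marg f A e"
proof (cases "e \<in> B")
  case True
  then have "marg f B e = 0" by (simp add: marg_def insert_absorb)
  moreover have "f A \<le> f (insert e A)" using assms True by (intro mono) auto
  ultimately show ?thesis by (simp add: marg_def)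
next
  case False
  have "f (insert e A \<union> B) + f (insert e A \<inter> B) \<le> f (insert e A) + f B"
    using assms by (intro submod) auto
  moreover have "insert e A \<union> B = insert e B" using assms by auto
  moreover have "insert e A \<inter> B = A" using assms False by auto
  ultimately show ?thesis by (simp add: marg_def)
qed

lemma marg_nonneg: "A \<subseteq> E \<Longrightarrow> e \<in> E \<Longrightarrow> marg f A e \<ge> 0"
  using mono[of A "insert e A"] by (simp add: marg_def subset_insertI)

lemma select_in:
  assumes "C \<subseteq> E" "C \<noteq> {}"
  shows "select f tb M C \<in> C"
proof -
  have finC: "finite C" using assms finE finite_subset by blast
  define best where "best = Max (marg f M ` C)"
  define T where "T = {e \<in> C. marg f M e = best}"
  have "best \<in> marg f M ` C" unfolding best_def using finC assms by (intro Max_in) auto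
  then have Tne: "T \<noteq> {}" unfolding T_def by auto
  have finT: "finite T" using finC unfolding T_def by auto
  have "Min (tb ` T) \<in> tb ` T" using Tne finT by (intro Min_in) auto
  then obtain e where e: "e \<in> T" "tb e = Min (tb ` T)" by auto
  have TE: "T \<subseteq> E" using assms unfolding T_def by auto
  have uniq: "e' = e" if "e' \<in> T \<and> tb e' = Min (tb ` T)" for e'
  proof -
    have "tb e' = tb e" using that e by simp
    moreover have "e' \<in> E" "e \<in> E" using that e TE by auto
    ultimately show ?thesis using inj_onD[OF inj] by blast
  qed
  have "(THE e. e \<in> T \<and> tb e = Min (tb ` T)) = e"
  proof (rule the_equality)
    show "e \<in> T \<and> tb e = Min (tb ` T)" using e by blast
  next
    fix x assume "x \<in> T \<and> tb x = Min (tb ` T)" then show "x = e" by (rule uniq)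
  qed
  moreover have "select f tb M C = (THE e. e \<in> T \<and> tb e = Min (tb ` T))"
    unfolding select_def Let_def T_def best_def by (rule refl)
  ultimately have "select f tb M C = e" by simp
  moreover have "e \<in> C" using e(1) unfolding T_def by blast
  ultimately show ?thesis by simp
qed


lemma step:
  assumes inv0: "Inv0 E (M,N,W,w)" and inv5: "Inv5 f (M,N,W,w) L" and ec: "e \<in> cands M W"
  defines "w' \<equiv> w(e := marg f M e)" and "W' \<equiv> W - {e' \<in> W. fst e' = fst e}"
  shows "\<exists>Lh Lt. Inv0 E (insert e M, N, W', w') \<and> Inv5 f (insert e M, N, W', w') Lh
     \<and> Inv0 E (M, insert e N, W', w') \<and> Inv5 f (M, insert e N, W', w') Lt
     \<and> Pot f p (M,N,W,w) L \<le> p * Pot f p (insert e M, N, W', w') Lh + (1-p) * Pot f p (M, insert e N, W', w') Lt"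
proof -
  have ME: "M \<subseteq> E" and NE: "N \<subseteq> E" and WE: "W \<subseteq> E" and WM: "W \<inter> M = {}" and WN: "W \<inter> N = {}"
    and mM: "is_matching M" and wN: "\<forall>x\<in>N. 0 \<le> w x"
    using inv0 by (auto simp: Inv0_def)
  have eW: "e \<in> W" and mi: "is_matching (insert e M)" using ec by (auto simp: cands_def)
  have eE: "e \<in> E" using eW WE by auto
  have eM: "e \<notin> M" and eN: "e \<notin> N" using eW WM WN by auto
  define S where "S = S_of N"
  have SofN: "S_of N = S" using S_def by simp
  have SN: "S \<subseteq> N" unfolding S_def by (rule S_of_sub)
  have SE: "S \<subseteq> E" using SN NE by auto
  have finS: "finite S" using SE finE finite_subset by blast
  have eS: "e \<notin> S" using SN eN by auto
  have sndM: "snd e \<notin> snd ` M"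
  proof
    assume "snd e \<in> snd ` M"
    then obtain m where m: "m \<in> M" "snd m = snd e" by auto
    then have "m \<noteq> e" using eM by auto
    then show False using mi m unfolding is_matching_def by force
  qed
  define X where "X = marg f M e"
  define Y where "Y = marg f (M \<union> S) e"
  have XY: "Y \<le> X" unfolding X_def Y_def using ME SE eE by (intro dimret) auto
  have X0: "0 \<le> X" unfolding X_def using ME eE by (rule marg_nonneg)
  have w'eq: "sum w' A = sum w A" if "e \<notin> A" for A
    unfolding w'_def using that by (intro sum.cong) auto
  define B where "B = sum w {x \<in> S. snd x = snd e}"
  define U where "U = sum w {x \<in> S. snd x \<notin> snd ` M}"
  define Psi where "Psi = f (M \<union> S) - f M"
  have P0: "Pot f p (M,N,W,w) L = (1-p)/p * sum w S - L - (1-p) * Psi - (1-p)^2/p * U"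
    unfolding Pot_def S_def Psi_def U_def by simp
  have W'E: "W' \<subseteq> E" using WE unfolding W'_def by auto
  have eW': "e \<notin> W'" unfolding W'_def by auto
  have inv0h: "Inv0 E (insert e M, N, W', w')"
    unfolding Inv0_def using ME eE NE W'E WM WN eW' mi wN eN unfolding W'_def w'_def by auto
  have inv5h: "Inv5 f (insert e M, N, W', w') L"
  proof -
    { fix A assume A: "A \<subseteq> S_of N"
      then have "e \<notin> A" using eS S_def by auto
      then have "sum w' A - L \<le> f A" using inv5 A w'eq by (auto simp: Inv5_def) }
    then show ?thesis by (auto simp: Inv5_def)
  qed
  have Uh: "sum w' {x \<in> S. snd x \<notin> snd ` insert e M} = U - B"
  proof -
    have "U = sum w {x \<in> {x \<in> S. snd x \<notin> snd ` M}. snd x = snd e} + sum w {x \<in> {x \<in> S. snd x \<notin> snd ` M}. snd x \<noteq> snd e}"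
      unfolding U_def using finS by (intro sum_split) auto
    moreover have "{x \<in> {x \<in> S. snd x \<notin> snd ` M}. snd x = snd e} = {x \<in> S. snd x = snd e}"
      using sndM by (auto simp: image_iff)
    moreover have "{x \<in> {x \<in> S. snd x \<notin> snd ` M}. snd x \<noteq> snd e} = {x \<in> S. snd x \<notin> snd ` insert e M}"
      by auto
    moreover have "sum w' {x \<in> S. snd x \<notin> snd ` insert e M} = sum w {x \<in> S. snd x \<notin> snd ` insert e M}"
      using eS by (intro w'eq) auto
    ultimately show ?thesis unfolding B_def by simp
  qed
  have Psih: "f (insert e M \<union> S) - f (insert e M) = Psi + Y - X"
    unfolding Psi_def X_def Y_def marg_def by simp
  have Ph: "Pot f p (insert e M, N, W', w') L = (1-p)/p * sum w S - L - (1-p) * (Psi + Y - X) - (1-p)^2/p * (U - B)"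
    unfolding Pot_def using Uh Psih w'eq[OF eS] by (simp add: SofN)
  have inv0t: "Inv0 E (M, insert e N, W', w')"
    unfolding Inv0_def using ME eE NE W'E WM WN eW' mM wN X0 unfolding W'_def w'_def X_def by auto
  show ?thesis
  proof (cases "\<forall>e'\<in>N. snd e' \<noteq> snd e")
    case True
    have St: "S_of (insert e N) = insert e S" unfolding S_def using eN True by (rule S_of_new)
    have "{x \<in> S. snd x = snd e} = {}" using True SN by blast
    then have B0: "B = 0" unfolding B_def by (simp only: sum.empty)
    have w'e: "w' e = X" unfolding w'_def X_def by simp
    have inv5t: "Inv5 f (M, insert e N, W', w') (L + (X - Y))"
    proof -
      { fix A assume A: "A \<subseteq> insert e S"
        have "sum w' A - (L + (X - Y)) \<le> f A"
        proof (cases "e \<in> A")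
          case True
          define A' where "A' = A - {e}"
          have A'S: "A' \<subseteq> S" using A unfolding A'_def by auto
          have eA': "e \<notin> A'" unfolding A'_def by auto
          have finA': "finite A'" using A'S finS finite_subset by blast
          have AA: "A = insert e A'" using True unfolding A'_def by auto
          have "sum w' A = X + sum w A'" unfolding AA using finA' eA' w'e w'eq[OF eA'] by simp
          moreover have "sum w A' - L \<le> f A'" using inv5 A'S S_def by (auto simp: Inv5_def)
          moreover have "Y \<le> marg f A' e" unfolding Y_def using A'S ME SE eE by (intro dimret) auto
          moreover have "f A = f A' + marg f A' e" unfolding AA marg_def by simp
          ultimately show ?thesis by linarith
        next
          case False
          then have "A \<subseteq> S" using A by auto
          then have "sum w A - L \<le> f A" using inv5 S_def by (auto simp: Inv5_def)
          then show ?thesis using w'eq[OF False] XY by linarith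
        qed }
      then show ?thesis by (auto simp: Inv5_def St)
    qed
    have Ut: "sum w' {x \<in> insert e S. snd x \<notin> snd ` M} = U + X"
    proof -
      have "{x \<in> insert e S. snd x \<notin> snd ` M} = insert e {x \<in> S. snd x \<notin> snd ` M}" using sndM by auto
      moreover have "finite {x \<in> S. snd x \<notin> snd ` M}" using finS by auto
      moreover have "e \<notin> {x \<in> S. snd x \<notin> snd ` M}" using eS by auto
      ultimately show ?thesis using w'e w'eq[of "{x \<in> S. snd x \<notin> snd ` M}"] unfolding U_def by simp
    qed
    have wSt: "sum w' (insert e S) = sum w S + X" using finS eS w'e w'eq[OF eS] by simp
    have Psit: "f (M \<union> insert e S) - f M = Psi + Y" unfolding Psi_def Y_def marg_def by simp
    have Pt: "Pot f p (M, insert e N, W', w') (L + (X - Y)) = (1-p)/p * (sum w S + X) - (L + (X - Y)) - (1-p) * (Psi + Y) - (1-p)^2/p * (U + X)"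
      unfolding Pot_def using Ut wSt Psit by (simp add: St)
    have "Pot f p (M,N,W,w) L \<le> p * Pot f p (insert e M, N, W', w') L + (1-p) * Pot f p (M, insert e N, W', w') (L + (X - Y))"
      unfolding P0 Ph Pt B0 using alg_eps[where aa="sum w S" and LL=L and ss=Psi and uu=U and xx=X and yy=Y, OF p0] by simp
    then show ?thesis using inv0h inv5h inv0t inv5t by blast
  next
    case False
    then obtain e'' where e'': "e'' \<in> N" "snd e'' = snd e" by auto
    have St: "S_of (insert e N) = {x \<in> S. snd x \<noteq> snd e}" unfolding S_def using eN e'' by (rule S_of_old)
    have eSt: "e \<notin> {x \<in> S. snd x \<noteq> snd e}" by auto
    have inv5t: "Inv5 f (M, insert e N, W', w') L"
    proof -
      { fix A assume A: "A \<subseteq> {x \<in> S. snd x \<noteq> snd e}"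
        then have "e \<notin> A" "A \<subseteq> S_of N" using S_def by auto
        then have "sum w' A - L \<le> f A" using inv5 w'eq by (auto simp: Inv5_def) }
      then show ?thesis by (auto simp: Inv5_def St)
    qed
    have wSt: "sum w' {x \<in> S. snd x \<noteq> snd e} = sum w S - B"
    proof -
      have "sum w S = sum w {x \<in> S. snd x = snd e} + sum w {x \<in> S. snd x \<noteq> snd e}"
        using finS by (rule sum_split)
      then show ?thesis using w'eq[OF eSt] unfolding B_def by simp
    qed
    have Ut: "sum w' {x \<in> {x \<in> S. snd x \<noteq> snd e}. snd x \<notin> snd ` M} = U - B"
    proof -
      have "U = sum w {x \<in> {x \<in> S. snd x \<notin> snd ` M}. snd x = snd e} + sum w {x \<in> {x \<in> S. snd x \<notin> snd ` M}. snd x \<noteq> snd e}"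
        unfolding U_def using finS by (intro sum_split) auto
      moreover have "{x \<in> {x \<in> S. snd x \<notin> snd ` M}. snd x = snd e} = {x \<in> S. snd x = snd e}"
        using sndM by (auto simp: image_iff)
      moreover have "{x \<in> {x \<in> S. snd x \<notin> snd ` M}. snd x \<noteq> snd e} = {x \<in> {x \<in> S. snd x \<noteq> snd e}. snd x \<notin> snd ` M}"
        by auto
      moreover have "sum w' {x \<in> {x \<in> S. snd x \<noteq> snd e}. snd x \<notin> snd ` M} = sum w {x \<in> {x \<in> S. snd x \<noteq> snd e}. snd x \<notin> snd ` M}"
        by (intro w'eq) auto
      ultimately show ?thesis unfolding B_def by simp
    qed
    have Psit: "f (M \<union> {x \<in> S. snd x \<noteq> snd e}) - f M \<le> Psi"
      unfolding Psi_def using mono[of "M \<union> {x \<in> S. snd x \<noteq> snd e}" "M \<union> S"] ME SE by auto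
    have Pt: "Pot f p (M, insert e N, W', w') L = (1-p)/p * (sum w S - B) - L - (1-p) * (f (M \<union> {x \<in> S. snd x \<noteq> snd e}) - f M) - (1-p)^2/p * (U - B)"
      unfolding Pot_def using Ut wSt by (simp add: St)
    have "Pot f p (M,N,W,w) L \<le> p * Pot f p (insert e M, N, W', w') L + (1-p) * Pot f p (M, insert e N, W', w') L"
      unfolding P0 Ph Pt using alg_neps[where aa="sum w S" and LL=L and uu=U and bb=B, OF p0 p1 XY Psit] by simp
    then show ?thesis using inv0h inv5h inv0t inv5t by blast
  qed
qed


lemma step0:
  assumes inv0: "Inv0 E (M,N,W,w)" and ec: "e \<in> cands M W"
  defines "w' \<equiv> w(e := marg f M e)" and "W' \<equiv> W - {e' \<in> W. fst e' = fst e}"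
  shows "Inv0 E (insert e M, N, W', w') \<and> Inv0 E (M, insert e N, W', w')"
proof -
  have ME: "M \<subseteq> E" and NE: "N \<subseteq> E" and WE: "W \<subseteq> E" and WM: "W \<inter> M = {}" and WN: "W \<inter> N = {}"
    and mM: "is_matching M" and wN: "\<forall>x\<in>N. 0 \<le> w x"
    using inv0 by (auto simp: Inv0_def)
  have eW: "e \<in> W" and mi: "is_matching (insert e M)" using ec by (auto simp: cands_def)
  have eE: "e \<in> E" using eW WE by auto
  have eN: "e \<notin> N" using eW WN by auto
  have X0: "0 \<le> marg f M e" using ME eE by (rule marg_nonneg)
  have W'E: "W' \<subseteq> E" using WE unfolding W'_def by auto
  have eW': "e \<notin> W'" unfolding W'_def by auto
  have "Inv0 E (insert e M, N, W', w')"
    unfolding Inv0_def using ME eE NE W'E WM WN eW' mi wN eN unfolding W'_def w'_def by auto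
  moreover have "Inv0 E (M, insert e N, W', w')"
    unfolding Inv0_def using ME eE NE W'E WM WN eW' mM wN X0 unfolding W'_def w'_def by auto
  ultimately show ?thesis by blast
qed

lemma cands_sub: "Inv0 E (M,N,W,w) \<Longrightarrow> cands M W \<subseteq> E"
  by (auto simp: Inv0_def cands_def)

lemma inv0_loop: "Inv0 E st \<Longrightarrow> Inv0 E (sim2_loop f tb c i n st)"
proof (induction n arbitrary: i st)
  case 0 then show ?case by simp
next
  case (Suc n)
  obtain M N W w where st: "st = (M,N,W,w)" by (cases st) auto
  show ?case
  proof (cases "cands M W = {}")
    case True then show ?thesis using Suc.prems by (simp add: st)
  next
    case False
    define e where "e = select f tb M (cands M W)"
    have ec: "e \<in> cands M W" unfolding e_def using cands_sub[of M N W w] Suc.prems st False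
      by (intro select_in) auto
    note s0 = step0[OF Suc.prems[unfolded st] ec]
    show ?thesis using False s0 Suc.IH by (simp add: st Let_def e_def[symmetric])
  qed
qed

lemma final_ge:
  assumes "Inv0 E st" "Inv5 f st L"
  shows "Pot f p st L \<le> Fv f p st"
proof -
  obtain M N W w where st: "st = (M,N,W,w)" by (cases st) auto
  have ME: "M \<subseteq> E" and NE: "N \<subseteq> E" and wN: "\<forall>x\<in>N. 0 \<le> w x"
    using assms(1) by (auto simp: Inv0_def st)
  have SN: "S_of N \<subseteq> N" by (rule S_of_sub)
  have fS: "sum w (S_of N) - L \<le> f (S_of N)" using assms(2) by (auto simp: Inv5_def st)
  have Psi: "0 \<le> f (M \<union> S_of N) - f M" using mono[of M "M \<union> S_of N"] ME NE SN by auto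
  have U: "0 \<le> sum w {x \<in> S_of N. snd x \<notin> snd ` M}" using wN SN by (intro sum_nonneg) auto
  have q: "0 \<le> 1 - p" using p1 by simp
  have "0 \<le> (1-p) * (f (M \<union> S_of N) - f M)" using q Psi by simp
  moreover have "0 \<le> (1-p)^2/p * sum w {x \<in> S_of N. snd x \<notin> snd ` M}" using U p0 by simp
  moreover have "(1-p)/p * sum w (S_of N) - L \<le> f (S_of N) - (1 - (1-p)/p) * sum w (S_of N)"
    using fS by (simp add: algebra_simps)
  ultimately show ?thesis by (simp add: Pot_def Fv_def st)
qed

lemma key:
  assumes "Inv0 E st" "Inv5 f st L"
  shows "Pot f p st L \<le> measure_pmf.expectation (Pi_pmf {i..<i+n} False (\<lambda>_. bernoulli_pmf p))
           (\<lambda>c. Fv f p (sim2_loop f tb c i n st))"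
  using assms
proof (induction n arbitrary: i st L)
  case 0 then show ?case using final_ge by simp
next
  case (Suc n)
  obtain M N W w where st: "st = (M,N,W,w)" by (cases st) auto
  show ?case
  proof (cases "cands M W = {}")
    case True
    then have "\<And>c. sim2_loop f tb c i (Suc n) st = st" by (simp add: st)
    then show ?thesis using final_ge[OF Suc.prems] by simp
  next
    case False
    define e where "e = select f tb M (cands M W)"
    have ec: "e \<in> cands M W" unfolding e_def using cands_sub[of M N W w] Suc.prems st False
      by (intro select_in) auto
    define w' where "w' = w(e := marg f M e)"
    define W' where "W' = W - {e' \<in> W. fst e' = fst e}"
    obtain Lh Lt where
      h0: "Inv0 E (insert e M, N, W', w')" and h5: "Inv5 f (insert e M, N, W', w') Lh" and
      t0: "Inv0 E (M, insert e N, W', w')" and t5: "Inv5 f (M, insert e N, W', w') Lt" and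
      ineq: "Pot f p (M,N,W,w) L \<le> p * Pot f p (insert e M, N, W', w') Lh + (1-p) * Pot f p (M, insert e N, W', w') Lt"
      using step[OF Suc.prems[unfolded st] ec] unfolding w'_def W'_def by blast
    let ?D = "\<lambda>A. Pi_pmf A False (\<lambda>_. bernoulli_pmf p)"
    have loopT: "sim2_loop f tb (c(i:=True)) i (Suc n) st = sim2_loop f tb c (Suc i) n (insert e M, N, W', w')" for c
    proof -
      have "sim2_loop f tb (c(i:=True)) i (Suc n) st = sim2_loop f tb (c(i:=True)) (Suc i) n (insert e M, N, W', w')"
        using False by (simp add: st Let_def e_def[symmetric] w'_def W'_def)
      also have "\<dots> = sim2_loop f tb c (Suc i) n (insert e M, N, W', w')"
        by (rule loop_cong) auto
      finally show ?thesis .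
    qed
    have loopF: "sim2_loop f tb (c(i:=False)) i (Suc n) st = sim2_loop f tb c (Suc i) n (M, insert e N, W', w')" for c
    proof -
      have "sim2_loop f tb (c(i:=False)) i (Suc n) st = sim2_loop f tb (c(i:=False)) (Suc i) n (M, insert e N, W', w')"
        using False by (simp add: st Let_def e_def[symmetric] w'_def W'_def)
      also have "\<dots> = sim2_loop f tb c (Suc i) n (M, insert e N, W', w')"
        by (rule loop_cong) auto
      finally show ?thesis .
    qed
    have set_eq: "{i..<i + Suc n} = insert i {Suc i..<Suc i + n}" by auto
    have "measure_pmf.expectation (?D {i..<i + Suc n}) (\<lambda>c. Fv f p (sim2_loop f tb c i (Suc n) st))
       = p * measure_pmf.expectation (?D {Suc i..<Suc i + n}) (\<lambda>c. Fv f p (sim2_loop f tb c (Suc i) n (insert e M, N, W', w')))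
       + (1-p) * measure_pmf.expectation (?D {Suc i..<Suc i + n}) (\<lambda>c. Fv f p (sim2_loop f tb c (Suc i) n (M, insert e N, W', w')))"
      unfolding set_eq using p0 p1 by (subst coins_step) (auto simp: loopT loopF)
    moreover have "Pot f p (insert e M, N, W', w') Lh \<le> measure_pmf.expectation (?D {Suc i..<Suc i + n}) (\<lambda>c. Fv f p (sim2_loop f tb c (Suc i) n (insert e M, N, W', w')))"
      by (rule Suc.IH[OF h0 h5])
    moreover have "Pot f p (M, insert e N, W', w') Lt \<le> measure_pmf.expectation (?D {Suc i..<Suc i + n}) (\<lambda>c. Fv f p (sim2_loop f tb c (Suc i) n (M, insert e N, W', w')))"
      by (rule Suc.IH[OF t0 t5])
    ultimately show ?thesis using ineq p0 p1 unfolding st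
      by (smt (verit, best) mult_left_mono)
  qed
qed

end

lemma coef_bound:
  fixes p t :: real
  assumes "0 < p" "p < 1" "t > 0"
  shows "(1 / ((t + p/(1-p)) / (p/(1-p))) - 1 / (t * p\<^sup>2)) \<le> 1 - (1-p)/p
       \<or> (1 / ((t + p/(1-p)) / (p/(1-p))) - 1 / (t * p\<^sup>2)) \<le> 0"
proof -
  have q: "0 < 1 - p" using assms by simp
  have den: "0 < p + t * (1-p)" using q assms by (simp add: add_pos_pos)
  have a: "t + p/(1-p) = (p + t * (1-p)) / (1-p)" using q by (simp add: field_simps)
  have q0: "1 - p \<noteq> 0" and d0: "p + t * (1-p) \<noteq> 0" using q den by auto
  have "1 / ((t + p/(1-p)) / (p/(1-p))) = (p/(1-p)) / ((p + t * (1-p)) / (1-p))"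
    unfolding a by simp
  also have "\<dots> = p / (p + t * (1-p))" using q0 d0 by (simp add: divide_simps)
  finally have th: "1 / ((t + p/(1-p)) / (p/(1-p))) = p / (p + t * (1-p))" .
  show ?thesis
  proof (cases "p \<ge> 1/2")
    case True
    have "0 \<le> t * (1-p) * (1 - p^2) + (2*p - 1) * p * (1-p) * t^2 + p"
      using True q assms by (intro add_nonneg_nonneg mult_nonneg_nonneg) (auto simp: power_le_one)
    then have nn: "0 \<le> (t * (1-p) * (1 - p^2) + (2*p - 1) * p * (1-p) * t^2 + p) / (p^2 * t * (p + t * (1-p)))"
      using den assms by (intro divide_nonneg_nonneg) auto
    define D where "D = p + t * (1-p)"
    have D0: "D \<noteq> 0" using den D_def by simp
    have "(1 - (1-p)/p) - (p / D - 1 / (t * p^2))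
       = (t * (1-p) * (1 - p^2) + (2*p - 1) * p * (1-p) * t^2 + p) / (p^2 * t * D)"
      using D0 assms by (simp add: field_simps power2_eq_square) (simp add: D_def algebra_simps)
    then have "(1 - (1-p)/p) - (p / (p + t * (1-p)) - 1 / (t * p^2))
       = (t * (1-p) * (1 - p^2) + (2*p - 1) * p * (1-p) * t^2 + p) / (p^2 * t * (p + t * (1-p)))"
      unfolding D_def .
    then have "p / (p + t * (1-p)) - 1 / (t * p^2) \<le> 1 - (1-p)/p"
      using nn by linarith
    then show ?thesis unfolding th by blast
  next
    case False
    have "p^3 \<le> 1 - p"
    proof -
      have "p^3 \<le> (1/2)^3" using False assms by (intro power_mono) auto
      moreover have "((1::real)/2)^3 = 1/8" by (simp add: power3_eq_cube)
      ultimately show ?thesis using False by linarith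
    qed
    then have "t * p^3 \<le> p + t * (1-p)" using assms by (smt (verit) mult_left_mono)
    then have le: "p * (t * p^2) \<le> p + t * (1-p)" by (simp add: power2_eq_square power3_eq_cube algebra_simps)
    have T0: "0 < t * p^2" using assms by simp
    have "p / (p + t * (1-p)) \<le> 1 / (t * p^2)"
    proof -
      define D where "D = p + t * (1-p)"
      define T where "T = t * p^2"
      have "0 < D" "0 < T" "p * T \<le> D" using den T0 le unfolding D_def T_def by auto
      then have "p / D \<le> 1 / T" by (simp add: divide_simps)
      then show ?thesis unfolding D_def T_def .
    qed
    then have "p / (p + t * (1-p)) - 1 / (t * p^2) \<le> 0" by simp
    then show ?thesis unfolding th by blast
  qed
qed

theorem lemma11:
  fixes L :: "'l set" and R :: "'r set" and E :: "('l \<times> 'r) set"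
    and f :: "('l \<times> 'r) set \<Rightarrow> real" and tb :: "'l \<times> 'r \<Rightarrow> nat"
    and p t :: real
  assumes "finite L" and "finite R" and "E \<subseteq> L \<times> R"
    and nonneg: "\<And>A. A \<subseteq> E \<Longrightarrow> f A \<ge> 0"
    and mono: "\<And>A B. A \<subseteq> B \<Longrightarrow> B \<subseteq> E \<Longrightarrow> f A \<le> f B"
    and submod: "\<And>A B. A \<subseteq> E \<Longrightarrow> B \<subseteq> E \<Longrightarrow> f (A \<union> B) + f (A \<inter> B) \<le> f A + f B"
    and "inj_on tb E"
    and "0 < p" and "p < 1" and "t > 0"
  shows "let \<alpha> = p / (1 - p); \<theta> = (t + \<alpha>) / \<alpha>;
             Sf = (\<lambda>c. case simulate2 E f tb c of (M, N, w) \<Rightarrow> f (S_of N));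
             Sw = (\<lambda>c. case simulate2 E f tb c of (M, N, w) \<Rightarrow> sum w (S_of N))
         in measure_pmf.expectation (coins (card E) p) Sf
              \<ge> (1 / \<theta> - 1 / (t * p\<^sup>2)) * measure_pmf.expectation (coins (card E) p) Sw"
proof -
  have finE: "finite E" using assms(1,2,3) finite_subset by (metis finite_cartesian_product)
  define st0 :: "('l \<times> 'r) set \<times> ('l \<times> 'r) set \<times> ('l \<times> 'r) set \<times> ('l \<times> 'r \<Rightarrow> real)"
    where "st0 = ({}, {}, E, (\<lambda>_. 0))"
  define lp where "lp = (\<lambda>c. sim2_loop f tb c 0 (card E) st0)"
  define Sf where "Sf = (\<lambda>c. case simulate2 E f tb c of (M, N, w) \<Rightarrow> f (S_of N))"
  define Sw where "Sw = (\<lambda>c. case simulate2 E f tb c of (M, N, w) \<Rightarrow> sum w (S_of N))"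
  define D where "D = coins (card E) p"
  define c0 where "c0 = 1 - (1-p)/p"
  have Sf_eq: "Sf c = f (S_of (fst (snd (lp c))))" for c
    unfolding Sf_def simulate2_def lp_def st0_def by (simp split: prod.splits)
  have Sw_eq: "Sw c = sum (snd (snd (snd (lp c)))) (S_of (fst (snd (lp c))))" for c
    unfolding Sw_def simulate2_def lp_def st0_def by (simp split: prod.splits)
  have Fv_eq: "Fv f p (lp c) = Sf c - c0 * Sw c" for c
    unfolding Sf_eq Sw_eq c0_def Fv_def by (simp split: prod.splits)
  have inv00: "Inv0 E st0" unfolding st0_def Inv0_def is_matching_def by auto
  have inv50: "Inv5 f st0 0" unfolding st0_def Inv5_def S_of_def using nonneg by auto
  have pot0: "Pot f p st0 0 = 0" unfolding st0_def Pot_def S_of_def by simp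
  have "Pot f p st0 0 \<le> measure_pmf.expectation (Pi_pmf {0..<0 + card E} False (\<lambda>_. bernoulli_pmf p))
           (\<lambda>c. Fv f p (sim2_loop f tb c 0 (card E) st0))"
    by (rule key[OF finE nonneg mono submod assms(7,8,9) inv00 inv50])
  then have E0: "0 \<le> measure_pmf.expectation D (\<lambda>c. Sf c - c0 * Sw c)"
    unfolding pot0 D_def coins_def using Fv_eq unfolding lp_def by (simp add: atLeast0LessThan)
  have finD: "finite (set_pmf D)" unfolding D_def coins_def by (simp add: set_Pi_pmf finite_PiE_dflt)
  have int: "integrable D g" for g :: "(nat \<Rightarrow> bool) \<Rightarrow> real" using finD by (rule integrable_measure_pmf_finite)
  have lin: "measure_pmf.expectation D (\<lambda>c. Sf c - c0 * Sw c) = measure_pmf.expectation D Sf - c0 * measure_pmf.expectation D Sw"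
    using int by simp
  have invF: "Inv0 E (lp c)" for c unfolding lp_def by (rule inv0_loop[OF finE nonneg mono submod assms(7,8,9) inv00])
  have Sf0: "0 \<le> Sf c" for c
  proof -
    have "S_of (fst (snd (lp c))) \<subseteq> E" using invF[of c] S_of_sub[of "fst (snd (lp c))"]
      by (auto simp: Inv0_def split: prod.splits)
    then show ?thesis unfolding Sf_eq by (rule nonneg)
  qed
  have Sw0: "0 \<le> Sw c" for c
  proof -
    have "\<forall>x\<in>fst (snd (lp c)). 0 \<le> snd (snd (snd (lp c))) x" using invF[of c]
      by (auto simp: Inv0_def split: prod.splits)
    then show ?thesis unfolding Sw_eq using S_of_sub[of "fst (snd (lp c))"] by (intro sum_nonneg) auto
  qed
  have ESf: "0 \<le> measure_pmf.expectation D Sf" using Sf0 by (simp add: integral_nonneg)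
  have ESw: "0 \<le> measure_pmf.expectation D Sw" using Sw0 by (simp add: integral_nonneg)
  have main: "c0 * measure_pmf.expectation D Sw \<le> measure_pmf.expectation D Sf" using E0 lin by simp
  define k where "k = 1 / ((t + p/(1-p)) / (p/(1-p))) - 1 / (t * p\<^sup>2)"
  have "k \<le> c0 \<or> k \<le> 0" unfolding k_def c0_def using coef_bound assms(8,9,10) by blast
  then have "k * measure_pmf.expectation D Sw \<le> measure_pmf.expectation D Sf"
  proof
    assume "k \<le> c0"
    then have "k * measure_pmf.expectation D Sw \<le> c0 * measure_pmf.expectation D Sw"
      using ESw by (rule mult_right_mono)
    then show ?thesis using main by linarith
  next
    assume "k \<le> 0"
    then have "k * measure_pmf.expectation D Sw \<le> 0" using ESw by (simp add: mult_nonpos_nonneg)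
    then show ?thesis using ESf by linarith
  qed
  then show ?thesis unfolding Let_def k_def D_def Sf_def Sw_def by simp
qed

end
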